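(* Let $n,g,k,t$ be positive integers with $t\le k$. If there exist an orthogonal array OA$(t,k,g)$ and a large set with multiplicity LS$(t,k,n;g^{k-t})$, then there exists a large set of H-designs LH$(n,g,k,t)$.
   Context: A Steiner system S$(t,k,n)$ is a pair $(Q,B)$ where $Q$ is an $n$-set and $B$ is a collection of $k$-subsets (blocks) of $Q$ such that every $t$-subset of $Q$ is contained in exactly one block. A large set with multiplicity $\mu$, LS$(t,k,n;\mu)$, is a family (the same system may occur more than once) of Steiner systems S$(t,k,n)$ on a common $n$-set $Q$ such that every $k$-subset of $Q$ is a block of exactly $\mu$ of the systems. An orthogonal array OA$(t,k,g)$ is a $g^t\times k$ matrix with entries from $\mathbb{Z}_g$ such that in the submatrix formed by any $t$ columns each ordered $t$-tuple over $\mathbb{Z}_g$ occurs exactly once as a row. An H-design H$(n,g,k,t)$ is a triple $(Q,G,B)$ where $Q$ is a set of $ng$ points, $G$ is a partition of $Q$ into $n$ groups of size $g$, and $B$ is a set of $k$-subsets of $Q$ (blocks) such that each block meets each group in at most one point and any $t$ points from $t$ distinct groups lie in exactly one block. A large set of H-designs LH$(n,g,k,t)$ is a partition of the set of all $k$-subsets of $Q$ meeting each group in at most one point into pairwise disjoint block sets, each forming an H-design H$(n,g,k,t)$ with the same $Q$ and $G$. *)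

theory Defs
  imports Main "HOL-Library.Disjoint_Sets"
begin

definition steiner_system :: "nat \<Rightarrow> nat \<Rightarrow> nat \<Rightarrow> 'a set \<Rightarrow> 'a set set \<Rightarrow> bool" where
  "steiner_system t k n Q B \<longleftrightarrow>
     finite Q \<and> card Q = n \<and>
     (\<forall>b\<in>B. b \<subseteq> Q \<and> card b = k) \<and>
     (\<forall>T. T \<subseteq> Q \<and> card T = t \<longrightarrow> (\<exists>!b. b \<in> B \<and> T \<subseteq> b))"

text \<open>Large set with multiplicity mu, LS(t,k,n;mu): a family (list, repetitions allowed)
  of Steiner systems S(t,k,n) on the common n-set Q such that every k-subset of Q
  is a block of exactly mu members of the family.\<close>
definition large_set_mult :: "nat \<Rightarrow> nat \<Rightarrow> nat \<Rightarrow> nat \<Rightarrow> 'a set \<Rightarrow> 'a set set list \<Rightarrow> bool" where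
  "large_set_mult t k n mu Q Bs \<longleftrightarrow>
     finite Q \<and> card Q = n \<and>
     (\<forall>i<length Bs. steiner_system t k n Q (Bs ! i)) \<and>
     (\<forall>K. K \<subseteq> Q \<and> card K = k \<longrightarrow> card {i. i < length Bs \<and> K \<in> Bs ! i} = mu)"

text \<open>Orthogonal array OA(t,k,g): a g^t x k matrix M (rows i < g^t, columns j < k)
  with entries in Z_g = {0..<g}, such that for any t columns C and any assignment f of
  symbols to these columns (an ordered t-tuple) exactly one row realises f.\<close>
definition orthogonal_array :: "nat \<Rightarrow> nat \<Rightarrow> nat \<Rightarrow> (nat \<Rightarrow> nat \<Rightarrow> nat) \<Rightarrow> bool" where
  "orthogonal_array t k g M \<longleftrightarrow>
     (\<forall>i<g ^ t. \<forall>j<k. M i j < g) \<and>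
     (\<forall>C f. C \<subseteq> {0..<k} \<and> card C = t \<and> (\<forall>j\<in>C. f j < g) \<longrightarrow>
        (\<exists>!i. i < g ^ t \<and> (\<forall>j\<in>C. M i j = f j)))"

definition group_partition :: "nat \<Rightarrow> nat \<Rightarrow> 'a set \<Rightarrow> 'a set set \<Rightarrow> bool" where
  "group_partition n g Q G \<longleftrightarrow>
     finite Q \<and> card Q = n * g \<and> partition_on Q G \<and> card G = n \<and> (\<forall>X\<in>G. card X = g)"

definition transversal_set :: "'a set set \<Rightarrow> 'a set \<Rightarrow> bool" where
  "transversal_set G S \<longleftrightarrow> (\<forall>X\<in>G. card (S \<inter> X) \<le> 1)"

definition H_design :: "nat \<Rightarrow> nat \<Rightarrow> nat \<Rightarrow> nat \<Rightarrow> 'a set \<Rightarrow> 'a set set \<Rightarrow> 'a set set \<Rightarrow> bool" where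
  "H_design n g k t Q G B \<longleftrightarrow>
     group_partition n g Q G \<and>
     (\<forall>b\<in>B. b \<subseteq> Q \<and> card b = k \<and> transversal_set G b) \<and>
     (\<forall>T. T \<subseteq> Q \<and> card T = t \<and> transversal_set G T \<longrightarrow> (\<exists>!b. b \<in> B \<and> T \<subseteq> b))"

definition large_H_set :: "nat \<Rightarrow> nat \<Rightarrow> nat \<Rightarrow> nat \<Rightarrow> 'a set \<Rightarrow> 'a set set \<Rightarrow> 'a set set set \<Rightarrow> bool" where
  "large_H_set n g k t Q G \<B> \<longleftrightarrow>
     group_partition n g Q G \<and>
     \<Union>\<B> = {S. S \<subseteq> Q \<and> card S = k \<and> transversal_set G S} \<and>
     disjoint \<B> \<and>
     (\<forall>B\<in>\<B>. H_design n g k t Q G B)"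

end

theory Submission imports Defs "HOL-Library.FuncSet" "HOL-Library.Nat_Bijection"
begin

locale oa_ctx =
  fixes t k g :: nat and M :: "nat \<Rightarrow> nat \<Rightarrow> nat"
  assumes oa: "orthogonal_array t k g M" and tk: "t \<le> k" and gpos: "0 < g"
begin

definition W :: "(nat \<Rightarrow> nat) set" where "W = {0..<k} \<rightarrow>\<^sub>E {0..<g}"
definition V :: "(nat \<Rightarrow> nat) set" where "V = {t..<k} \<rightarrow>\<^sub>E {0..<g}"
definition row :: "(nat \<Rightarrow> nat) \<Rightarrow> nat" where
  "row w = (THE r. r < g^t \<and> (\<forall>j\<in>{0..<t}. M r j = w j))"
definition cls :: "(nat \<Rightarrow> nat) \<Rightarrow> (nat \<Rightarrow> nat)" where
  "cls w = (\<lambda>j\<in>{t..<k}. (w j + g - M (row w) j) mod g)"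
definition wd :: "nat \<Rightarrow> (nat \<Rightarrow> nat) \<Rightarrow> (nat \<Rightarrow> nat)" where
  "wd r v = (\<lambda>j\<in>{0..<k}. if j < t then M r j else (M r j + v j) mod g)"

lemma Mlt: "r < g^t \<Longrightarrow> j < k \<Longrightarrow> M r j < g"
  using oa unfolding orthogonal_array_def by blast

lemma oa_uniq: "C \<subseteq> {0..<k} \<Longrightarrow> card C = t \<Longrightarrow> (\<forall>j\<in>C. f j < g) \<Longrightarrow>
   \<exists>!i. i < g ^ t \<and> (\<forall>j\<in>C. M i j = f j)"
  using oa unfolding orthogonal_array_def by blast

lemma row_ex: "(\<forall>j<t. f j < g) \<Longrightarrow> \<exists>!r. r<g^t \<and> (\<forall>j\<in>{0..<t}. M r j = f j)"
  by (rule oa_uniq) (use tk in auto)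

lemma row: "w \<in> W \<Longrightarrow> row w < g^t \<and> (\<forall>j\<in>{0..<t}. M (row w) j = w j)"
  unfolding row_def
  by (rule theI') (rule row_ex, use tk in \<open>auto simp: W_def PiE_iff\<close>)

lemma row_unique: "w \<in> W \<Longrightarrow> r < g^t \<Longrightarrow> (\<forall>j\<in>{0..<t}. M r j = w j) \<Longrightarrow> row w = r"
  unfolding row_def
  by (rule the1_equality) (rule row_ex, use tk in \<open>auto simp: W_def PiE_iff\<close>)

lemma modlem: "(a::nat) < g \<Longrightarrow> b < g \<Longrightarrow> (a + (b + g - a) mod g) mod g = b"
proof -
  assume a: "a < g" and b: "b < g"
  have "(a + (b + g - a) mod g) mod g = (a + (b + g - a)) mod g" by (simp add: mod_add_right_eq)
  also have "a + (b + g - a) = b + g" using a by simp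
  finally show ?thesis using b by simp
qed

lemma modlem2: "(a::nat) < g \<Longrightarrow> b < g \<Longrightarrow> ((a + b) mod g + g - a) mod g = b"
proof -
  assume a: "a < g" and b: "b < g"
  have "((a + b) mod g + g - a) mod g = ((a + b) mod g + (g - a)) mod g" using a by simp
  also have "\<dots> = (a + b + (g - a)) mod g" by (simp add: mod_add_left_eq)
  also have "a + b + (g - a) = b + g" using a by simp
  finally show ?thesis using b by simp
qed

lemma modlem3: "(a::nat) < g \<Longrightarrow> b < g \<Longrightarrow> ((b + g - a) mod g + a) mod g = b"
  using modlem[of a b] by (simp add: add.commute)

lemma wd_cls: "w \<in> W \<Longrightarrow> wd (row w) (cls w) = w"
proof
  fix j assume w: "w \<in> W"
  show "wd (row w) (cls w) j = w j"
  proof (cases "j < k")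
    case True
    have wj: "w j < g" using w True by (auto simp: W_def PiE_iff)
    have Mj: "M (row w) j < g" using Mlt row[OF w] True by blast
    show ?thesis using True row[OF w] modlem[OF Mj wj]
      by (auto simp: wd_def cls_def)
  next
    case False
    then show ?thesis using w by (auto simp: wd_def W_def PiE_iff extensional_def)
  qed
qed

lemma wd_in: "r < g^t \<Longrightarrow> wd r v \<in> W"
  using Mlt gpos by (auto simp: wd_def W_def PiE_iff extensional_def)

lemma row_wd: "r < g^t \<Longrightarrow> row (wd r v) = r"
  by (rule row_unique[OF wd_in]) (use tk in \<open>auto simp: wd_def\<close>)

lemma cls_wd: "r < g^t \<Longrightarrow> v \<in> V \<Longrightarrow> cls (wd r v) = v"
proof
  fix j assume r: "r < g^t" and v: "v \<in> V"
  show "cls (wd r v) j = v j"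
  proof (cases "t \<le> j \<and> j < k")
    case True
    have "M r j < g" using Mlt r True by blast
    moreover have "v j < g" using v True by (auto simp: V_def PiE_iff)
    ultimately show ?thesis using True row_wd[OF r] modlem2
      by (auto simp: wd_def cls_def)
  next
    case False
    then show ?thesis using v by (auto simp: cls_def V_def PiE_iff extensional_def)
  qed
qed

lemma cls_in: "w \<in> W \<Longrightarrow> cls w \<in> V"
  using gpos by (auto simp: cls_def V_def PiE_iff)

lemma card_V: "card V = g ^ (k - t)"
  by (simp add: V_def card_PiE)

lemma class_design:
  assumes v: "v \<in> V" and C: "C \<subseteq> {0..<k}" "card C = t" and f: "\<forall>j\<in>C. f j < g"
  shows "\<exists>!w. w \<in> W \<and> cls w = v \<and> (\<forall>j\<in>C. w j = f j)"
proof -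
  define f' where "f' j = (if j < t then f j else (f j + g - v j) mod g)" for j
  have f'lt: "\<forall>j\<in>C. f' j < g" using f gpos by (auto simp: f'_def)
  have key: "w \<in> W \<and> cls w = v \<and> (\<forall>j\<in>C. w j = f j) \<longleftrightarrow>
     (\<exists>r. r < g^t \<and> (\<forall>j\<in>C. M r j = f' j) \<and> w = wd r v)" for w
  proof
    assume h: "w \<in> W \<and> cls w = v \<and> (\<forall>j\<in>C. w j = f j)"
    hence ww: "w = wd (row w) v" using wd_cls by metis
    have "\<forall>j\<in>C. M (row w) j = f' j"
    proof
      fix j assume j: "j \<in> C"
      have jk: "j < k" using C j by auto
      show "M (row w) j = f' j"
      proof (cases "j < t")
        case True
        then show ?thesis using row h j by (auto simp: f'_def)
      next
        case False
        have "w j = wd (row w) v j" using arg_cong[where f="\<lambda>h. h j", OF ww] .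
        hence "f j = (M (row w) j + v j) mod g" using h j jk False
          by (simp add: wd_def)
        hence fj: "f j = (v j + M (row w) j) mod g" by (simp add: add.commute)
        have Ml: "M (row w) j < g" using Mlt row h jk by blast
        have vl: "v j < g" using v False jk by (auto simp: V_def PiE_iff)
        show ?thesis using False modlem2[OF vl Ml] fj
          by (simp add: f'_def)
      qed
    qed
    then show "\<exists>r. r < g^t \<and> (\<forall>j\<in>C. M r j = f' j) \<and> w = wd r v"
      using row h ww by blast
  next
    assume "\<exists>r. r < g^t \<and> (\<forall>j\<in>C. M r j = f' j) \<and> w = wd r v"
    then obtain r where r: "r < g^t" "\<forall>j\<in>C. M r j = f' j" "w = wd r v" by blast
    have "\<forall>j\<in>C. w j = f j"
    proof
      fix j assume j: "j \<in> C"
      have jk: "j < k" using C j by auto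
      show "w j = f j"
      proof (cases "j < t")
        case True
        then show ?thesis using r j jk by (auto simp: f'_def wd_def)
      next
        case False
        have "v j < g" using v False jk by (auto simp: V_def PiE_iff)
        moreover have "f j < g" using f j by auto
        moreover have e1: "w j = (M r j + v j) mod g" using r(3) jk False by (simp add: wd_def)
        moreover have e2: "M r j = (f j + g - v j) mod g" using r(2) j False by (simp add: f'_def)
        ultimately show ?thesis using modlem3 by simp
      qed
    qed
    then show "w \<in> W \<and> cls w = v \<and> (\<forall>j\<in>C. w j = f j)"
      using r wd_in cls_wd v by blast
  qed
  obtain r where r: "r < g^t" "\<forall>j\<in>C. M r j = f' j"
    and ru: "\<And>r'. r' < g^t \<Longrightarrow> (\<forall>j\<in>C. M r' j = f' j) \<Longrightarrow> r' = r"
    using oa_uniq[OF C f'lt] by blast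
  show ?thesis
  proof (rule ex1I[of _ "wd r v"])
    show "wd r v \<in> W \<and> cls (wd r v) = v \<and> (\<forall>j\<in>C. wd r v j = f j)"
      using key r by blast
  next
    fix w assume "w \<in> W \<and> cls w = v \<and> (\<forall>j\<in>C. w j = f j)"
    then obtain r' where "r' < g^t" "\<forall>j\<in>C. M r' j = f' j" "w = wd r' v" using key by blast
    then show "w = wd r v" using ru by blast
  qed
qed

end

definition el :: "nat set \<Rightarrow> nat \<Rightarrow> nat" where "el K j = sorted_list_of_set K ! j"

lemma el_bij: "finite K \<Longrightarrow> bij_betw (el K) {0..<card K} K"
  unfolding el_def
  by (rule bij_betw_nth) auto

definition blk :: "nat \<Rightarrow> nat set \<Rightarrow> (nat \<Rightarrow> nat) \<Rightarrow> (nat \<times> nat) set" where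
  "blk k K w = (\<lambda>j. (el K j, w j)) ` {0..<k}"

lemma transv_inj:
  fixes Q :: "nat set" and g :: nat and S :: "(nat \<times> nat) set"
  assumes "S \<subseteq> Q \<times> {0..<g}" "transversal_set ((\<lambda>x. {x} \<times> {0..<g}) ` Q) S"
  shows "inj_on fst S"
proof (rule inj_onI)
  fix a b assume ab: "a \<in> S" "b \<in> S" "fst a = fst b"
  obtain x y where a: "a = (x, y)" by fastforce
  obtain y' where b: "b = (x, y')" using ab(3) a by (cases b) auto
  have xQ: "x \<in> Q" using ab a assms(1) by auto
  let ?X = "S \<inter> ({x} \<times> {0..<g})"
  have c1: "card ?X \<le> 1" using assms(2) xQ unfolding transversal_set_def by blast
  have fX: "finite ({x} \<times> {0..<g})" by simp
  have f2: "finite ?X" using fX by simp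
  have m: "a \<in> ?X" "b \<in> ?X" using ab a b assms(1) by auto
  have "\<forall>u\<in>?X. \<forall>v\<in>?X. u = v" using c1 f2 card_le_Suc0_iff_eq[OF f2] by simp
  then show "a = b" using m by blast
qed

locale main_ctx = oa_ctx +
  fixes n :: nat and Q :: "nat set" and Bs :: "nat set set list"
    and \<phi> :: "nat set \<Rightarrow> nat \<Rightarrow> (nat \<Rightarrow> nat)"
  assumes ls: "large_set_mult t k n (g ^ (k - t)) Q Bs"
    and kpos: "0 < k"
    and phi: "\<And>K. K \<subseteq> Q \<Longrightarrow> card K = k \<Longrightarrow>
        bij_betw (\<phi> K) {i. i < length Bs \<and> K \<in> Bs ! i} V"
begin

definition P :: "(nat \<times> nat) set" where "P = Q \<times> {0..<g}"
definition G :: "(nat \<times> nat) set set" where "G = (\<lambda>x. {x} \<times> {0..<g}) ` Q"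
definition D :: "nat \<Rightarrow> (nat \<times> nat) set set" where
  "D i = {blk k K w | K w. K \<in> Bs ! i \<and> w \<in> W \<and> cls w = \<phi> K i}"

lemma finQ: "finite Q" and cardQ: "card Q = n"
  using ls by (auto simp: large_set_mult_def)

lemma steiner: "i < length Bs \<Longrightarrow> steiner_system t k n Q (Bs ! i)"
  using ls by (auto simp: large_set_mult_def)

lemma blockQ: "i < length Bs \<Longrightarrow> K \<in> Bs ! i \<Longrightarrow> K \<subseteq> Q \<and> card K = k \<and> finite K"
  using steiner[of i] kpos unfolding steiner_system_def by (metis card_gt_0_iff)

lemma gp: "group_partition n g P G"
proof -
  have inj: "inj_on (\<lambda>x. {x} \<times> {0..<g}) Q"
    using gpos by (intro inj_onI) auto
  have e: "{} \<notin> G"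
  proof
    assume "{} \<in> G"
    then obtain x where x: "{} = {x} \<times> {0..<g}" unfolding G_def by auto
    have "(x, 0) \<in> {x} \<times> {0..<g}" using gpos by simp
    then show False using x by blast
  qed
  have part: "partition_on P G"
  proof (rule partition_onI)
    show "\<Union>G = P" unfolding G_def P_def by auto
    show "\<And>p q. p \<in> G \<Longrightarrow> q \<in> G \<Longrightarrow> p \<noteq> q \<Longrightarrow> disjnt p q"
      unfolding G_def disjnt_def by auto
    show "{} \<notin> G" by (rule e)
  qed
  show ?thesis unfolding group_partition_def
    using finQ cardQ part card_image[OF inj]
    by (auto simp: P_def G_def card_cartesian_product)
qed

lemma blk_fst: "finite K \<Longrightarrow> card K = k \<Longrightarrow> fst ` blk k K w = K"
  using el_bij[of K] unfolding blk_def bij_betw_def by (simp add: image_image)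

lemma blk_props:
  assumes K: "K \<subseteq> Q" "card K = k" "finite K" and w: "w \<in> W"
  shows "blk k K w \<subseteq> P \<and> card (blk k K w) = k \<and> transversal_set G (blk k K w)"
proof -
  have bij: "bij_betw (el K) {0..<k} K" using el_bij[of K] K by simp
  have inj: "inj_on (\<lambda>j. (el K j, w j)) {0..<k}"
    using bij unfolding bij_betw_def inj_on_def by auto
  have sub: "blk k K w \<subseteq> P"
    using bij w K unfolding blk_def P_def bij_betw_def W_def by (auto simp: PiE_iff)
  have card: "card (blk k K w) = k" unfolding blk_def using card_image[OF inj] by simp
  have tr: "transversal_set G (blk k K w)"
    unfolding transversal_set_def
  proof
    fix X assume "X \<in> G"
    then obtain x where X: "X = {x} \<times> {0..<g}" unfolding G_def by blast
    have "\<forall>a\<in>blk k K w \<inter> X. \<forall>b\<in>blk k K w \<inter> X. a = b"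
      using bij unfolding blk_def X bij_betw_def inj_on_def by auto
    moreover have "finite (blk k K w \<inter> X)" unfolding blk_def by simp
    ultimately show "card (blk k K w \<inter> X) \<le> 1"
      using card_le_Suc0_iff_eq by (metis One_nat_def)
  qed
  show ?thesis using sub card tr by blast
qed

lemma blk_inj:
  assumes K: "finite K" "card K = k" and w: "w \<in> W" "w' \<in> W"
    and eq: "blk k K w = blk k K w'"
  shows "w = w'"
proof
  fix j show "w j = w' j"
  proof (cases "j < k")
    case True
    have bij: "bij_betw (el K) {0..<k} K" using el_bij[of K] K by simp
    have "(el K j, w j) \<in> blk k K w" unfolding blk_def using True by auto
    hence "(el K j, w j) \<in> blk k K w'" using eq by simp
    then obtain j' where "j' < k" "el K j = el K j'" "w j = w' j'" unfolding blk_def by auto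
    moreover then have "j = j'" using bij True unfolding bij_betw_def inj_on_def by auto
    ultimately show ?thesis by simp
  next
    case False
    then show ?thesis using w by (auto simp: W_def PiE_iff extensional_def)
  qed
qed

lemma decomp:
  assumes S: "S \<subseteq> P" "card S = k" "transversal_set G S"
  shows "\<exists>w\<in>W. S = blk k (fst ` S) w \<and> card (fst ` S) = k \<and> fst ` S \<subseteq> Q"
proof -
  define K where "K = fst ` S"
  have inj: "inj_on fst S" using transv_inj[of S Q g] S unfolding P_def G_def by blast
  have fS: "finite S" using S kpos card_gt_0_iff by blast
  have cK: "card K = k" using card_image[OF inj] S K_def by simp
  have fK: "finite K" using fS K_def by simp
  have KQ: "K \<subseteq> Q" using S unfolding K_def P_def by auto
  have bij: "bij_betw (el K) {0..<k} K" using el_bij[of K] cK fK by simp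
  define w where "w = (\<lambda>j\<in>{0..<k}. THE a. (el K j, a) \<in> S)"
  have wprop: "(el K j, w j) \<in> S" if j: "j < k" for j
  proof -
    have "el K j \<in> K" using bij j unfolding bij_betw_def by auto
    then obtain a where a: "(el K j, a) \<in> S" unfolding K_def by force
    have "(THE a. (el K j, a) \<in> S) = a"
      by (rule the_equality, rule a, metis inj a inj_onD fst_conv prod.inject)
    then show ?thesis using a j unfolding w_def by simp
  qed
  have wlt: "w j < g" if "j < k" for j using wprop[OF that] S(1) unfolding P_def by auto
  have wext: "w \<in> extensional {0..<k}" unfolding w_def by simp
  have wW: "w \<in> W" using wlt wext unfolding W_def PiE_iff by auto
  have "S = blk k K w"
  proof
    show "blk k K w \<subseteq> S" unfolding blk_def using wprop by auto
  next
    show "S \<subseteq> blk k K w"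
    proof
      fix p assume p: "p \<in> S"
      then have "fst p \<in> K" unfolding K_def by auto
      then obtain j where j: "j < k" "el K j = fst p" using bij unfolding bij_betw_def
        by (metis atLeastLessThan_iff imageE)
      have pe: "p = (el K j, w j)"
        using inj wprop[OF j(1)] p j(2) unfolding inj_on_def by (metis fst_conv)
      show "p \<in> blk k K w" unfolding blk_def using j(1) pe by (intro image_eqI[of p _ j]) auto
    qed
  qed
  then have e1: "S = blk k (fst ` S) w" by (simp add: K_def)
  have e2: "card (fst ` S) = k" "fst ` S \<subseteq> Q" using cK KQ by (simp_all add: K_def)
  have "S = blk k (fst ` S) w \<and> card (fst ` S) = k \<and> fst ` S \<subseteq> Q"
    by (intro conjI e1 e2)
  then show ?thesis by (rule bexI[OF _ wW])
qed

lemma IK_card: "K \<subseteq> Q \<Longrightarrow> card K = k \<Longrightarrow> card {i. i < length Bs \<and> K \<in> Bs ! i} = g ^ (k - t)"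
  using ls unfolding large_set_mult_def by blast

lemma union: "\<Union>(D ` {0..<length Bs}) = {S. S \<subseteq> P \<and> card S = k \<and> transversal_set G S}"
proof
  show "\<Union>(D ` {0..<length Bs}) \<subseteq> {S. S \<subseteq> P \<and> card S = k \<and> transversal_set G S}"
  proof
    fix S assume "S \<in> \<Union>(D ` {0..<length Bs})"
    then obtain i where i: "i < length Bs" "S \<in> D i" by auto
    then obtain K w where Kw: "S = blk k K w" "K \<in> Bs ! i" "w \<in> W"
      unfolding D_def by blast
    have "K \<subseteq> Q" "card K = k" "finite K" using blockQ[OF i(1) Kw(2)] by auto
    then show "S \<in> {S. S \<subseteq> P \<and> card S = k \<and> transversal_set G S}"
      using blk_props[of K w] Kw by simp
  qed
next
  show "{S. S \<subseteq> P \<and> card S = k \<and> transversal_set G S} \<subseteq> \<Union>(D ` {0..<length Bs})"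
  proof
    fix S assume "S \<in> {S. S \<subseteq> P \<and> card S = k \<and> transversal_set G S}"
    then obtain w where w: "w \<in> W" "S = blk k (fst ` S) w" "card (fst ` S) = k" "fst ` S \<subseteq> Q"
      using decomp by blast
    define K where "K = fst ` S"
    have b: "bij_betw (\<phi> K) {i. i < length Bs \<and> K \<in> Bs ! i} V"
      using phi w K_def by blast
    have "cls w \<in> V" using cls_in w by blast
    then have "cls w \<in> \<phi> K ` {i. i < length Bs \<and> K \<in> Bs ! i}"
      using b unfolding bij_betw_def by simp
    then obtain i where i0: "i \<in> {i. i < length Bs \<and> K \<in> Bs ! i}" "cls w = \<phi> K i"
      by (rule imageE)
    then have i: "i < length Bs" "K \<in> Bs ! i" "\<phi> K i = cls w" by auto
    have SK: "S = blk k K w" unfolding K_def by (rule w(2))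
    have "S \<in> D i" unfolding D_def mem_Collect_eq
      by (intro exI[of _ K] exI[of _ w] conjI SK i(2) w(1) i(3)[symmetric])
    then show "S \<in> \<Union>(D ` {0..<length Bs})" using i by auto
  qed
qed

lemma disj: "disjoint (D ` {0..<length Bs})"
proof -
  have key: "i = j" if i: "i < length Bs" and j: "j < length Bs" and S: "S \<in> D i" "S \<in> D j" for i j S
  proof -
    obtain K w where Kw: "S = blk k K w" "K \<in> Bs ! i" "w \<in> W" "cls w = \<phi> K i"
      using S(1) unfolding D_def by blast
    obtain K' w' where Kw': "S = blk k K' w'" "K' \<in> Bs ! j" "w' \<in> W" "cls w' = \<phi> K' j"
      using S(2) unfolding D_def by blast
    have K: "K \<subseteq> Q" "card K = k" "finite K" using blockQ i Kw by auto
    have K': "K' \<subseteq> Q" "card K' = k" "finite K'" using blockQ j Kw' by auto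
    have "K = K'" using blk_fst[of K w] blk_fst[of K' w'] K K' Kw Kw' by simp
    hence "w = w'" using blk_inj[of K w w'] K Kw Kw' by simp
    hence "\<phi> K i = \<phi> K j" using Kw Kw' \<open>K = K'\<close> by simp
    moreover have "inj_on (\<phi> K) {i. i < length Bs \<and> K \<in> Bs ! i}"
      using phi[OF K(1,2)] bij_betw_def by blast
    ultimately show "i = j" using i j Kw(2) Kw'(2) \<open>K = K'\<close> unfolding inj_on_def by blast
  qed
  show ?thesis unfolding disjoint_def pairwise_def disjnt_def
  proof (intro ballI impI)
    fix A B assume AB: "A \<in> D ` {0..<length Bs}" "B \<in> D ` {0..<length Bs}" "A \<noteq> B"
    obtain i where i: "i < length Bs" "A = D i" using AB(1) by auto
    obtain j where j: "j < length Bs" "B = D j" using AB(2) by auto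
    note ij = i(1) j(1) i(2) j(2)
    show "A \<inter> B = {}"
    proof (rule ccontr)
      assume "A \<inter> B \<noteq> {}"
      then obtain S where "S \<in> A" "S \<in> B" by blast
      hence "S \<in> D i" "S \<in> D j" using ij by auto
      then have "i = j" using key ij by blast
      then show False using ij AB(3) by simp
    qed
  qed
qed

lemma Hdes:
  assumes i: "i < length Bs"
  shows "H_design n g k t P G (D i)"
proof -
  have blocks: "\<forall>b\<in>D i. b \<subseteq> P \<and> card b = k \<and> transversal_set G b"
  proof
    fix S assume "S \<in> D i"
    then obtain K w where Kw: "S = blk k K w" "K \<in> Bs ! i" "w \<in> W"
      unfolding D_def by blast
    have "K \<subseteq> Q" "card K = k" "finite K" using blockQ[OF i Kw(2)] by auto
    then show "S \<subseteq> P \<and> card S = k \<and> transversal_set G S"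
      using blk_props[of K w] Kw by simp
  qed
  have main: "\<exists>!b. b \<in> D i \<and> T \<subseteq> b"
    if T: "T \<subseteq> P" "card T = t" "transversal_set G T" for T
  proof -
    have inj: "inj_on fst T" using transv_inj[of T Q g] T unfolding P_def G_def by blast
    define Y where "Y = fst ` T"
    have cY: "card Y = t" using card_image[OF inj] T Y_def by simp
    have YQ: "Y \<subseteq> Q" using T unfolding Y_def P_def by auto
    obtain K where K: "K \<in> Bs ! i" "Y \<subseteq> K" and Ku: "\<And>K'. K' \<in> Bs ! i \<Longrightarrow> Y \<subseteq> K' \<Longrightarrow> K' = K"
      using steiner[OF i] cY YQ unfolding steiner_system_def by metis
    have KQ: "K \<subseteq> Q" "card K = k" "finite K" using blockQ[OF i K(1)] by auto
    have bij: "bij_betw (el K) {0..<k} K" using el_bij[of K] KQ by simp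
    define C where "C = {j\<in>{0..<k}. el K j \<in> Y}"
    have injC: "inj_on (el K) C" using bij unfolding C_def bij_betw_def inj_on_def by auto
    have imC: "el K ` C = Y"
    proof
      show "el K ` C \<subseteq> Y" unfolding C_def by auto
      show "Y \<subseteq> el K ` C"
      proof
        fix y assume y: "y \<in> Y"
        then have "y \<in> K" using K by auto
        then obtain j where "j < k" "el K j = y" using bij unfolding bij_betw_def
          by (metis atLeastLessThan_iff imageE)
        then show "y \<in> el K ` C" unfolding C_def using y by auto
      qed
    qed
    have cC: "card C = t" using card_image[OF injC] imC cY by simp
    have Csub: "C \<subseteq> {0..<k}" unfolding C_def by auto
    define f where "f j = (THE a. (el K j, a) \<in> T)" for j
    have fprop: "(el K j, f j) \<in> T" if j: "j \<in> C" for j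
    proof -
      have "el K j \<in> Y" using j unfolding C_def by auto
      then obtain a where a: "(el K j, a) \<in> T" unfolding Y_def by force
      have "(THE a. (el K j, a) \<in> T) = a"
        by (rule the_equality, rule a, metis inj a inj_onD fst_conv prod.inject)
      then show ?thesis using a unfolding f_def by simp
    qed
    have flt: "\<forall>j\<in>C. f j < g"
    proof
      fix j assume j: "j \<in> C"
      have "(el K j, f j) \<in> Q \<times> {0..<g}" using fprop[OF j] T(1) unfolding P_def by blast
      then show "f j < g" by simp
    qed
    have v: "\<phi> K i \<in> V" using phi[OF KQ(1,2)] i K(1) unfolding bij_betw_def by auto
    obtain w where w: "w \<in> W" "cls w = \<phi> K i" "\<forall>j\<in>C. w j = f j"
      and wu: "\<And>w'. w' \<in> W \<Longrightarrow> cls w' = \<phi> K i \<Longrightarrow> \<forall>j\<in>C. w' j = f j \<Longrightarrow> w' = w"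
      using class_design[OF v Csub cC flt] by metis
    show ?thesis
    proof (rule ex1I[of _ "blk k K w"])
      have "T \<subseteq> blk k K w"
      proof
        fix p assume p: "p \<in> T"
        then have "fst p \<in> Y" unfolding Y_def by auto
        then obtain j where j: "j \<in> C" "el K j = fst p" using imC by (metis imageE)
        have pe: "p = (el K j, f j)" using inj fprop[OF j(1)] p j(2) unfolding inj_on_def
          by (metis fst_conv)
        have jk: "j < k" using j(1) Csub by auto
        have "p = (el K j, w j)" using pe w(3) j(1) by simp
        then show "p \<in> blk k K w" unfolding blk_def using jk by (intro image_eqI[of p _ j]) auto
      qed
      moreover have "blk k K w \<in> D i" unfolding D_def using K w by auto
      ultimately show "blk k K w \<in> D i \<and> T \<subseteq> blk k K w" by blast
    next
      fix b assume b: "b \<in> D i \<and> T \<subseteq> b"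
      then obtain K' w' where Kw': "b = blk k K' w'" "K' \<in> Bs ! i" "w' \<in> W" "cls w' = \<phi> K' i"
        unfolding D_def by blast
      have K': "K' \<subseteq> Q" "card K' = k" "finite K'" using blockQ[OF i Kw'(2)] by auto
      have "Y \<subseteq> K'" using b Kw'(1) blk_fst[OF K'(3,2), of w'] unfolding Y_def by blast
      hence KK: "K' = K" using Ku Kw'(2) by blast
      have "\<forall>j\<in>C. w' j = f j"
      proof
        fix j assume j: "j \<in> C"
        have "(el K j, f j) \<in> blk k K w'" using fprop[OF j] b Kw'(1) KK by blast
        then obtain j' where "j' < k" "el K j = el K j'" "f j = w' j'" unfolding blk_def by auto
        moreover then have "j = j'" using bij j Csub unfolding bij_betw_def inj_on_def by auto
        ultimately show "w' j = f j" by simp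
      qed
      hence "w' = w" using wu Kw'(3,4) KK by blast
      then show "b = blk k K w" using Kw'(1) KK by simp
    qed
  qed
  have main': "\<forall>T. T \<subseteq> P \<and> card T = t \<and> transversal_set G T \<longrightarrow> (\<exists>!b. b \<in> D i \<and> T \<subseteq> b)"
    using main by (intro allI impI) (elim conjE)
  show ?thesis unfolding H_design_def by (intro conjI gp blocks main')
qed

lemma result: "large_H_set n g k t P G (D ` {0..<length Bs})"
  unfolding large_H_set_def
  by (intro conjI gp union disj ballI) (auto intro: Hdes)

end


lemma transversal_image:
  assumes inj: "inj h"
  shows "transversal_set ((`) h ` G) (h ` S) \<longleftrightarrow> transversal_set G S"
proof -
  have injX: "inj_on h X" for X using inj by (rule inj_on_subset) simp
  have "card (h ` S \<inter> h ` X) = card (S \<inter> X)" for X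
    using card_image[OF injX[of "S \<inter> X"]] image_Int[OF inj, of S X] by simp
  then show ?thesis unfolding transversal_set_def by auto
qed

lemma transfer_LH:
  fixes h :: "'a \<Rightarrow> 'b"
  assumes inj: "inj h" and L: "large_H_set n g k t Q G BB"
  shows "large_H_set n g k t (h ` Q) ((`) h ` G) ((`) ((`) h) ` BB)"
proof -
  have injX: "inj_on h X" for X using inj by (rule inj_on_subset) simp
  have ci: "card (h ` X) = card X" for X using card_image[OF injX] .
  have injI: "inj_on ((`) h) XX" for XX
    using inj_image_eq_iff[OF inj] by (auto simp: inj_on_def)
  have tr: "transversal_set ((`) h ` G) (h ` S) \<longleftrightarrow> transversal_set G S" for S
    by (rule transversal_image[OF inj])
  have gp: "group_partition n g Q G" using L unfolding large_H_set_def by blast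
  have gp': "group_partition n g (h ` Q) ((`) h ` G)"
  proof -
    have p: "partition_on Q G" using gp unfolding group_partition_def by blast
    have "{} \<notin> G" using p partition_onD3 by blast
    then have "(`) h ` G - {{}} = (`) h ` G" by auto
    then have "partition_on (h ` Q) ((`) h ` G)"
      using partition_on_inj_image[OF p injX[of Q]] by simp
    moreover have "card ((`) h ` G) = card G" using card_image[OF injI] .
    ultimately show ?thesis using gp ci unfolding group_partition_def by auto
  qed
  have un: "\<Union>BB = {S. S \<subseteq> Q \<and> card S = k \<and> transversal_set G S}"
    using L unfolding large_H_set_def by blast
  have un': "\<Union>((`) ((`) h) ` BB) = {S. S \<subseteq> h ` Q \<and> card S = k \<and> transversal_set ((`) h ` G) S}"
  proof -
    have "\<Union>((`) ((`) h) ` BB) = (`) h ` (\<Union>BB)" by auto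
    also have "\<dots> = {S. S \<subseteq> h ` Q \<and> card S = k \<and> transversal_set ((`) h ` G) S}"
    proof
      show "(`) h ` (\<Union>BB) \<subseteq> {S. S \<subseteq> h ` Q \<and> card S = k \<and> transversal_set ((`) h ` G) S}"
        using un ci tr by auto
      show "{S. S \<subseteq> h ` Q \<and> card S = k \<and> transversal_set ((`) h ` G) S} \<subseteq> (`) h ` (\<Union>BB)"
      proof
        fix S' assume S': "S' \<in> {S. S \<subseteq> h ` Q \<and> card S = k \<and> transversal_set ((`) h ` G) S}"
        then obtain S where S: "S \<subseteq> Q" "S' = h ` S" by (auto simp: subset_image_iff)
        then have "S \<in> \<Union>BB" using un S' ci tr by auto
        then show "S' \<in> (`) h ` (\<Union>BB)" using S by blast
      qed
    qed
    finally show ?thesis .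
  qed
  have dj: "disjoint ((`) ((`) h) ` BB)"
    using disjoint_image[OF injI] L unfolding large_H_set_def by blast
  have hd: "H_design n g k t (h ` Q) ((`) h ` G) ((`) h ` B)" if B: "B \<in> BB" for B
  proof -
    have H: "H_design n g k t Q G B" using L B unfolding large_H_set_def by blast
    have bl: "\<forall>b\<in>B. b \<subseteq> Q \<and> card b = k \<and> transversal_set G b"
      and ex: "\<And>T. T \<subseteq> Q \<Longrightarrow> card T = t \<Longrightarrow> transversal_set G T \<Longrightarrow> \<exists>!b. b \<in> B \<and> T \<subseteq> b"
      using H unfolding H_design_def by blast+
    have bl': "\<forall>b\<in>(`) h ` B. b \<subseteq> h ` Q \<and> card b = k \<and> transversal_set ((`) h ` G) b"
      using bl ci tr by auto
    have ex': "\<exists>!b. b \<in> (`) h ` B \<and> T' \<subseteq> b"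
      if T': "T' \<subseteq> h ` Q" "card T' = t" "transversal_set ((`) h ` G) T'" for T'
    proof -
      obtain T where T: "T \<subseteq> Q" "T' = h ` T" using T'(1) by (auto simp: subset_image_iff)
      have "card T = t" "transversal_set G T" using T T' ci tr by auto
      then obtain b where b: "b \<in> B" "T \<subseteq> b" and bu: "\<And>b'. b' \<in> B \<Longrightarrow> T \<subseteq> b' \<Longrightarrow> b' = b"
        using ex[OF T(1)] by metis
      show ?thesis
      proof (rule ex1I[of _ "h ` b"])
        show "h ` b \<in> (`) h ` B \<and> T' \<subseteq> h ` b" using b T by auto
      next
        fix b' assume b': "b' \<in> (`) h ` B \<and> T' \<subseteq> b'"
        then obtain b2 where b2: "b2 \<in> B" "b' = h ` b2" by auto
        have "T \<subseteq> b2" using b' b2 T inj_image_subset_iff[OF inj] by auto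
        then show "b' = h ` b" using bu b2 by simp
      qed
    qed
    show ?thesis unfolding H_design_def
      by (intro conjI gp' bl' allI impI ex') auto
  qed
  show ?thesis unfolding large_H_set_def
    by (intro conjI gp' un' dj ballI) (auto intro: hd)
qed

theorem theorem5:
  fixes n g k t :: nat
  assumes "0 < n" and "0 < g" and "0 < k" and "0 < t" and "t \<le> k"
    and "\<exists>M. orthogonal_array t k g M"
    and "\<exists>(Q :: nat set) Bs. large_set_mult t k n (g ^ (k - t)) Q Bs"
  shows "\<exists>(Q :: nat set) G \<B>. large_H_set n g k t Q G \<B>"
proof -
  obtain M where M: "orthogonal_array t k g M" using assms(6) by blast
  obtain Q :: "nat set" and Bs where ls: "large_set_mult t k n (g ^ (k - t)) Q Bs"
    using assms(7) by blast
  interpret O: oa_ctx t k g M using M assms(2,5) by unfold_locales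
  have "\<forall>K. \<exists>f. K \<subseteq> Q \<and> card K = k \<longrightarrow> bij_betw f {i. i < length Bs \<and> K \<in> Bs ! i} O.V"
  proof
    fix K
    show "\<exists>f. K \<subseteq> Q \<and> card K = k \<longrightarrow> bij_betw f {i. i < length Bs \<and> K \<in> Bs ! i} O.V"
    proof (cases "K \<subseteq> Q \<and> card K = k")
      case True
      have c: "card {i. i < length Bs \<and> K \<in> Bs ! i} = g ^ (k - t)"
        using ls True unfolding large_set_mult_def by blast
      have f1: "finite {i. i < length Bs \<and> K \<in> Bs ! i}" by simp
      have f2: "finite O.V" unfolding O.V_def by (rule finite_PiE) auto
      obtain f where "bij_betw f {i. i < length Bs \<and> K \<in> Bs ! i} O.V"
        using finite_same_card_bij[OF f1 f2] c O.card_V by auto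
      then show ?thesis by blast
    next
      case False
      then show ?thesis by blast
    qed
  qed
  then obtain \<phi> where phi: "\<And>K. K \<subseteq> Q \<Longrightarrow> card K = k \<Longrightarrow> bij_betw (\<phi> K) {i. i < length Bs \<and> K \<in> Bs ! i} O.V"
    by metis
  interpret MC: main_ctx t k g M n Q Bs \<phi>
    by (unfold_locales) (use ls assms(3) phi in auto)
  have "large_H_set n g k t MC.P MC.G (MC.D ` {0..<length Bs})" by (rule MC.result)
  then have "large_H_set n g k t (prod_encode ` MC.P) ((`) prod_encode ` MC.G)
      ((`) ((`) prod_encode) ` (MC.D ` {0..<length Bs}))"
    by (rule transfer_LH[OF inj_prod_encode])
  then show ?thesis by blast
qed

end
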